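(* Fix $-1\le\eta_1<\eta_2\le1$ and $\delta>0$. For all $x\ge2$ and $Z\ge2$, $$ \sum_{s\in S(-1,1;x)}T_Z(W(s))\ll_{\delta,\mathbb{K}} x^{1/2+\delta}\left(\log Z+\frac{x\log x}{Z}\right). $$ In particular, for $Z=x$ the sum is $\ll_{\delta,\mathbb{K}} x^{1/2+2\delta}$.
   Context: $\mathbb{K}=\mathbb{Q}(\sqrt d)$ is a real quadratic field of class number one, $\epsilon>1$ its fundamental unit, $\sigma_1,\sigma_2$ the identity and conjugate embeddings, $\mathcal{N}(a)=|N_{\mathbb{K}/\mathbb{Q}}(a)|$. $S(-1,1;x)=\{s\in\mathcal{O}_{\mathbb{K}}: \epsilon^{-1}|\sigma_2(s)|<|\sigma_1(s)|\le\epsilon|\sigma_2(s)|,\ \sigma_1(s)>0,\ \mathcal{N}(s)\le x\}$. For $s\ne0$, $W(s)=\log|\sigma_1(s)/\sigma_2(s)|/(2\log\epsilon)$ (so $W(s)\in(-1/2,1/2]$ on this set). $T_Z(W)=\min\{\log Z,\ 1/(Z\|W-\eta_1/2\|)+1/(Z\|W-\eta_2/2\|)\}$, where $\|X\|$ is the distance of $X$ to the nearest integer and the minimum equals $\log Z$ when a denominator vanishes. *)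

theory Defs
  imports Complex_Main "HOL-Computational_Algebra.Squarefree"
begin

text \<open>K = Q(sqrt d), d > 1 squarefree, realised inside the reals via the identity embedding sigma_1.\<close>
definition real_quadratic_field :: "int \<Rightarrow> bool" where
  "real_quadratic_field d \<longleftrightarrow> d > 1 \<and> squarefree d"

definition omegaK :: "int \<Rightarrow> real" where
  "omegaK d = (if d mod 4 = 1 then (1 + sqrt (real_of_int d)) / 2 else sqrt (real_of_int d))"

definition OK :: "int \<Rightarrow> real set" where
  "OK d = {real_of_int a + real_of_int b * omegaK d | a b. True}"

definition qconj :: "int \<Rightarrow> real \<Rightarrow> real" where
  "qconj d s = (THE t. \<exists>a b :: rat. s = of_rat a + of_rat b * sqrt (real_of_int d)
                                   \<and> t = of_rat a - of_rat b * sqrt (real_of_int d))"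

definition normK :: "int \<Rightarrow> real \<Rightarrow> real" where
  "normK d s = \<bar>s * qconj d s\<bar>"

definition OK_units :: "int \<Rightarrow> real set" where
  "OK_units d = {u \<in> OK d. u \<noteq> 0 \<and> 1 / u \<in> OK d}"

definition is_fundamental_unit :: "int \<Rightarrow> real \<Rightarrow> bool" where
  "is_fundamental_unit d \<epsilon> \<longleftrightarrow> \<epsilon> \<in> OK_units d \<and> \<epsilon> > 1 \<and> (\<forall>u \<in> OK_units d. u > 1 \<longrightarrow> \<epsilon> \<le> u)"

definition is_OK_ideal :: "int \<Rightarrow> real set \<Rightarrow> bool" where
  "is_OK_ideal d I \<longleftrightarrow> I \<subseteq> OK d \<and> 0 \<in> I \<and> (\<forall>x\<in>I. \<forall>y\<in>I. x + y \<in> I)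
                          \<and> (\<forall>r\<in>OK d. \<forall>x\<in>I. r * x \<in> I)"

definition class_number_one :: "int \<Rightarrow> bool" where
  "class_number_one d \<longleftrightarrow> (\<forall>I. is_OK_ideal d I \<longrightarrow> (\<exists>g\<in>OK d. I = {r * g | r. r \<in> OK d}))"

definition S_set :: "int \<Rightarrow> real \<Rightarrow> real \<Rightarrow> real set" where
  "S_set d \<epsilon> x = {s \<in> OK d. \<bar>qconj d s\<bar> / \<epsilon> < \<bar>s\<bar> \<and> \<bar>s\<bar> \<le> \<epsilon> * \<bar>qconj d s\<bar>
                       \<and> s > 0 \<and> normK d s \<le> x}"

definition W :: "int \<Rightarrow> real \<Rightarrow> real \<Rightarrow> real" where
  "W d \<epsilon> s = ln \<bar>s / qconj d s\<bar> / (2 * ln \<epsilon>)"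

definition dist_int :: "real \<Rightarrow> real" where
  "dist_int X = \<bar>X - of_int (round X)\<bar>"

definition T_Z :: "real \<Rightarrow> real \<Rightarrow> real \<Rightarrow> real \<Rightarrow> real" where
  "T_Z Z \<eta>1 \<eta>2 w =
     (if dist_int (w - \<eta>1 / 2) = 0 \<or> dist_int (w - \<eta>2 / 2) = 0 then ln Z
      else min (ln Z) (1 / (Z * dist_int (w - \<eta>1 / 2)) + 1 / (Z * dist_int (w - \<eta>2 / 2))))"

end

theory Submission
  imports Defs
begin

lemma sqrt_irr:
  assumes "real_quadratic_field d"
  shows "sqrt (real_of_int d) \<notin> \<rat>"
proof
  assume "sqrt (real_of_int d) \<in> \<rat>"
  then obtain a b :: int where b: "b > 0" and cop: "coprime a b"
    and eq: "sqrt (real_of_int d) = of_int a / of_int b"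
    by (rule Rats_cases') blast
  have d1: "d > 1" and sf: "squarefree d" using assms by (auto simp: real_quadratic_field_def)
  have "real_of_int d = (of_int a / of_int b)^2" using eq d1
    by (metis of_int_0_le_iff less_imp_le less_trans zero_less_one real_sqrt_pow2)
  hence "real_of_int d * (of_int b)^2 = (of_int a)^2" using b by (simp add: field_simps)
  hence deq: "d * b^2 = a^2" by (metis of_int_eq_iff of_int_mult of_int_power)
  have "b^2 dvd a^2" using deq by (metis dvd_triv_right)
  moreover have "coprime (b^2) (a^2)" using cop by (simp add: coprime_commute)
  ultimately have "is_unit (b^2)" by (metis coprime_dvd_mult_right_iff dvd_refl mult.right_neutral coprime_absorb_right)
  hence "b^2 = 1" by (simp add: is_unit_power_iff)
  hence "b = 1" using b by (auto simp: power2_eq_1_iff)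
  hence "d = a^2" using deq by simp
  hence "a^2 dvd d" by simp
  hence "a dvd 1" using sf squarefreeD by blast
  hence "a^2 = 1" by (metis power2_abs zdvd1_eq one_power2)
  thus False using \<open>d = a^2\<close> d1 by simp
qed

lemma rep_unique:
  assumes "real_quadratic_field d"
    and "of_rat a + of_rat b * sqrt (real_of_int d) = of_rat a' + of_rat b' * sqrt (real_of_int d)"
  shows "a = a' \<and> b = b'"
proof (cases "b = b'")
  case True
  then show ?thesis using assms(2) by simp
next
  case False
  have "(of_rat b - of_rat b') * sqrt (real_of_int d) = of_rat a' - of_rat a"
    using assms(2) by (simp add: algebra_simps)
  hence "sqrt (real_of_int d) = (of_rat a' - of_rat a) / (of_rat b - of_rat b')"
    using False by (simp add: field_simps)
  also have "\<dots> = of_rat ((a' - a) / (b - b'))" by (simp add: of_rat_diff of_rat_divide)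
  finally have "sqrt (real_of_int d) \<in> \<rat>" by (metis Rats_of_rat)
  with sqrt_irr[OF assms(1)] show ?thesis by blast
qed

lemma qconj_eq:
  assumes "real_quadratic_field d"
  shows "qconj d (of_rat a + of_rat b * sqrt (real_of_int d)) = of_rat a - of_rat b * sqrt (real_of_int d)"
  unfolding qconj_def
  by (rule the_equality) (auto dest: rep_unique[OF assms])

lemma OK_rep:
  assumes "real_quadratic_field d" and "s \<in> OK d"
  shows "\<exists>(p::int) (q::int). s = (p + q * sqrt (real_of_int d)) / 2 \<and> qconj d s = (p - q * sqrt (real_of_int d)) / 2"
proof -
  obtain a b :: int where s: "s = a + b * omegaK d" using assms(2) unfolding OK_def by blast
  show ?thesis
  proof (cases "d mod 4 = 1")
    case True
    have e: "s = of_rat (of_int a + of_int b / 2) + of_rat (of_int b / 2) * sqrt (real_of_int d)"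
      using True by (simp add: s omegaK_def of_rat_add of_rat_divide of_rat_mult field_simps)
    have "qconj d s = of_rat (of_int a + of_int b / 2) - of_rat (of_int b / 2) * sqrt (real_of_int d)"
      unfolding e by (rule qconj_eq[OF assms(1)])
    hence "qconj d s = (of_int (2*a+b) - of_int b * sqrt (real_of_int d)) / 2"
      by (simp add: of_rat_add of_rat_divide of_rat_mult field_simps)
    moreover have "s = (of_int (2*a+b) + of_int b * sqrt (real_of_int d)) / 2"
      using True by (simp add: s omegaK_def field_simps)
    ultimately show ?thesis by blast
  next
    case False
    have e: "s = of_rat (of_int a) + of_rat (of_int b) * sqrt (real_of_int d)"
      using False by (simp add: s omegaK_def)
    have "qconj d s = of_rat (of_int a) - of_rat (of_int b) * sqrt (real_of_int d)"
      unfolding e by (rule qconj_eq[OF assms(1)])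
    hence "qconj d s = (of_int (2*a) - of_int (2*b) * sqrt (real_of_int d)) / 2"
      by (simp add: field_simps)
    moreover have "s = (of_int (2*a) + of_int (2*b) * sqrt (real_of_int d)) / 2"
      using False by (simp add: s omegaK_def field_simps)
    ultimately show ?thesis by blast
  qed
qed

lemma strip_count:
  fixes T :: "(int \<times> int) set" and M l :: real and L :: "int \<Rightarrow> real"
  assumes T: "\<And>p q. (p,q) \<in> T \<Longrightarrow> 0 \<le> p \<and> real_of_int p \<le> M \<and> L p \<le> real_of_int q \<and> real_of_int q \<le> L p + l"
    and l: "0 \<le> l" and M: "0 \<le> M"
  shows "finite T \<and> real (card T) \<le> (M+1)*(l+1)"
proof -
  define B where "B = (\<lambda>p. {\<lceil>L p\<rceil>..\<lfloor>L p + l\<rfloor>})"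
  define Sg where "Sg = Sigma {0..\<lfloor>M\<rfloor>} B"
  have sub: "T \<subseteq> Sg"
  proof
    fix z assume "z \<in> T"
    then obtain p q where z: "z = (p,q)" and pq: "(p,q) \<in> T" by (cases z) auto
    from T[OF pq] have "0 \<le> p" "p \<le> \<lfloor>M\<rfloor>" "\<lceil>L p\<rceil> \<le> q" "q \<le> \<lfloor>L p + l\<rfloor>"
      by (auto simp: le_floor_iff ceiling_le_iff)
    thus "z \<in> Sg" unfolding Sg_def B_def z by auto
  qed
  have fin: "finite Sg" unfolding Sg_def B_def by auto
  have cS: "card Sg = (\<Sum>p\<in>{0..\<lfloor>M\<rfloor>}. card (B p))"
    unfolding Sg_def B_def by (rule card_SigmaI) auto
  have cB: "real (card (B p)) \<le> l + 1" for p
  proof -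
    have "real (card (B p)) = real (nat (\<lfloor>L p + l\<rfloor> - \<lceil>L p\<rceil> + 1))" unfolding B_def by simp
    also have "\<dots> \<le> l + 1"
    proof (cases "\<lfloor>L p + l\<rfloor> - \<lceil>L p\<rceil> + 1 \<ge> 0")
      case True
      hence "real (nat (\<lfloor>L p + l\<rfloor> - \<lceil>L p\<rceil> + 1)) = of_int (\<lfloor>L p + l\<rfloor>) - of_int (\<lceil>L p\<rceil>) + 1" by simp
      also have "\<dots> \<le> (L p + l) - L p + 1" using of_int_floor_le[of "L p + l"] le_of_int_ceiling[of "L p"] by linarith
      finally show ?thesis by simp
    next
      case False thus ?thesis using l by simp
    qed
    finally show ?thesis .
  qed
  have "real (card T) \<le> real (card Sg)" using card_mono[OF fin sub] by simp
  also have "\<dots> = (\<Sum>p\<in>{0..\<lfloor>M\<rfloor>}. real (card (B p)))" using cS by simp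
  also have "\<dots> \<le> (\<Sum>p\<in>{0..\<lfloor>M\<rfloor>}. l + 1)" by (rule sum_mono) (rule cB)
  also have "\<dots> = real (nat (\<lfloor>M\<rfloor> + 1)) * (l + 1)" by simp
  also have "\<dots> \<le> (M + 1) * (l + 1)"
  proof -
    have "real (nat (\<lfloor>M\<rfloor> + 1)) = of_int \<lfloor>M\<rfloor> + 1" using M by simp
    also have "\<dots> \<le> M + 1" by simp
    finally show ?thesis using l by (intro mult_right_mono) auto
  qed
  finally show ?thesis using finite_subset[OF sub fin] by blast
qed

lemma wedge:
  fixes u v \<alpha> \<beta> M :: real
  assumes "0 < v" "0 < \<alpha>" "\<alpha> * v \<le> u" "u \<le> \<beta> * v" "u + v \<le> M"
  shows "(u+v)*((\<alpha>-1)/(\<alpha>+1)) \<le> u - v \<and> u - v \<le> (u+v)*((\<alpha>-1)/(\<alpha>+1)) + 2*M*(\<beta>-\<alpha>)"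
proof -
  have a1: "\<alpha> + 1 > 0" using assms by simp
  have e: "u - v - (u+v)*((\<alpha>-1)/(\<alpha>+1)) = 2*(u - \<alpha>*v)/(\<alpha>+1)"
    using a1 by (simp add: field_simps)
  have n: "0 \<le> u - \<alpha>*v" using assms by simp
  have "2*(u - \<alpha>*v)/(\<alpha>+1) \<le> 2*(u - \<alpha>*v)"
    using n assms(2) by (simp add: divide_le_eq field_simps mult_left_mono)
  also have "u - \<alpha>*v \<le> (\<beta> - \<alpha>)*v" using assms by (simp add: algebra_simps)
  hence "2*(u - \<alpha>*v) \<le> 2*M*(\<beta>-\<alpha>)"
  proof -
    assume h: "u - \<alpha>*v \<le> (\<beta> - \<alpha>)*v"
    have "\<alpha> * v \<le> \<beta> * v" using assms by linarith
    hence "\<alpha> \<le> \<beta>" using assms(1) by simp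
    hence ba: "\<beta> - \<alpha> \<ge> 0" by simp
    have "0 < \<alpha> * v" using assms by simp
    hence "v \<le> M" using assms by linarith
    hence "(\<beta> - \<alpha>)*v \<le> (\<beta> - \<alpha>)*M" using ba by (simp add: mult_left_mono)
    thus ?thesis using h by (simp add: algebra_simps)
  qed
  finally have "2*(u - \<alpha>*v)/(\<alpha>+1) \<le> 2*M*(\<beta>-\<alpha>)" .
  moreover have "0 \<le> 2*(u - \<alpha>*v)/(\<alpha>+1)" using n a1 by simp
  ultimately show ?thesis using e by linarith
qed

lemma count_rho:
  fixes \<epsilon> x \<alpha> \<beta> :: real
  assumes rq: "real_quadratic_field d" and e: "\<epsilon> > 1" and x: "x \<ge> 1" and a: "\<alpha> > 0"
    and ab: "\<alpha> \<le> min \<beta> \<epsilon>"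
  shows "finite {s \<in> S_set d \<epsilon> x. \<alpha> \<le> s / \<bar>qconj d s\<bar> \<and> s / \<bar>qconj d s\<bar> \<le> \<beta>}
    \<and> real (card {s \<in> S_set d \<epsilon> x. \<alpha> \<le> s / \<bar>qconj d s\<bar> \<and> s / \<bar>qconj d s\<bar> \<le> \<beta>})
       \<le> 2 * (2 * sqrt (\<epsilon> * x) + 1) * (2 * (2 * sqrt (\<epsilon> * x)) * (min \<beta> \<epsilon> - \<alpha>) + 1)"
proof -
  define A where "A = {s \<in> S_set d \<epsilon> x. \<alpha> \<le> s / \<bar>qconj d s\<bar> \<and> s / \<bar>qconj d s\<bar> \<le> \<beta>}"
  define M where "M = 2 * sqrt (\<epsilon> * x)"
  define \<beta>1 where "\<beta>1 = min \<beta> \<epsilon>"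
  define sd where "sd = sqrt (real_of_int d)"
  define A1 where "A1 = (\<alpha> - 1) / (\<alpha> + 1)"
  define cond where "cond = (\<lambda>u v. 0 < v \<and> \<alpha> * v \<le> u \<and> u \<le> \<beta>1 * v \<and> u + v \<le> M)"
  define g where "g = (\<lambda>(p::int,q::int). (real_of_int p + real_of_int q * sd) / 2)"
  define T1 where "T1 = {(p::int,q::int). cond ((real_of_int p + real_of_int q * sd) / 2) ((real_of_int p - real_of_int q * sd) / 2)}"
  define T2 where "T2 = {(p::int,q::int). cond ((real_of_int p + real_of_int q * sd) / 2) (- ((real_of_int p - real_of_int q * sd) / 2))}"
  have d1: "d > 1" using rq by (simp add: real_quadratic_field_def)
  have sd1: "sd \<ge> 1" unfolding sd_def using d1 by simp
  have M0: "M \<ge> 0" unfolding M_def using e x by simp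
  have l0: "2 * M * (\<beta>1 - \<alpha>) \<ge> 0" using M0 ab unfolding \<beta>1_def by simp
  have sub: "A \<subseteq> g ` (T1 \<union> T2)"
  proof
    fix s assume sA: "s \<in> A"
    hence sS: "s \<in> OK d" and b1: "\<bar>qconj d s\<bar> / \<epsilon> < \<bar>s\<bar>" and b2: "\<bar>s\<bar> \<le> \<epsilon> * \<bar>qconj d s\<bar>"
      and sp: "s > 0" and nx: "normK d s \<le> x"
      and r1: "\<alpha> \<le> s / \<bar>qconj d s\<bar>" and r2: "s / \<bar>qconj d s\<bar> \<le> \<beta>"
      unfolding A_def S_set_def by auto
    obtain p q :: int where s_eq: "s = (real_of_int p + real_of_int q * sd) / 2" and c_eq: "qconj d s = (real_of_int p - real_of_int q * sd) / 2"
      using OK_rep[OF rq sS] unfolding sd_def by blast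
    define v where "v = \<bar>qconj d s\<bar>"
    have "v \<noteq> 0" using b2 sp unfolding v_def by auto
    hence vp: "v > 0" unfolding v_def by simp
    have "\<alpha> * v \<le> s" using r1 vp unfolding v_def by (simp add: le_divide_eq)
    moreover have "s \<le> \<beta> * v" using r2 vp unfolding v_def by (simp add: divide_le_eq)
    moreover have "s \<le> \<epsilon> * v" using b2 sp unfolding v_def by simp
    ultimately have c1: "\<alpha> * v \<le> s" and c2: "s \<le> \<beta>1 * v" unfolding \<beta>1_def by (auto simp: min_def)
    have sv: "s * v \<le> x" using nx sp unfolding normK_def v_def by (simp add: abs_mult)
    have "s * s \<le> \<epsilon> * x"
    proof -
      have "s * s \<le> s * (\<epsilon> * v)" using b2 sp unfolding v_def by (simp add: mult_left_mono)
      also have "\<dots> = \<epsilon> * (s * v)" by simp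
      also have "\<dots> \<le> \<epsilon> * x" using sv e by simp
      finally show ?thesis .
    qed
    hence su: "s \<le> sqrt (\<epsilon> * x)" by (simp add: real_le_rsqrt power2_eq_square)
    have "v * v \<le> \<epsilon> * x"
    proof -
      have "v < \<epsilon> * s" using b1 sp e unfolding v_def by (simp add: divide_less_eq mult.commute)
      hence "v * v \<le> (\<epsilon> * s) * v" using vp by simp
      also have "\<dots> = \<epsilon> * (s * v)" by simp
      also have "\<dots> \<le> \<epsilon> * x" using sv e by simp
      finally show ?thesis .
    qed
    hence vu: "v \<le> sqrt (\<epsilon> * x)" by (simp add: real_le_rsqrt power2_eq_square)
    have cnd: "cond s v" unfolding cond_def M_def using vp c1 c2 su vu by simp
    show "s \<in> g ` (T1 \<union> T2)"
    proof (cases "qconj d s > 0")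
      case True
      hence veq: "v = (p - q * sd) / 2" unfolding v_def using c_eq by simp
      have "cond ((real_of_int p + real_of_int q * sd) / 2) ((real_of_int p - real_of_int q * sd) / 2)"
        using cnd unfolding s_eq veq .
      hence "(p,q) \<in> T1" unfolding T1_def by simp
      thus ?thesis using s_eq unfolding g_def by force
    next
      case False
      hence veq: "v = - ((p - q * sd) / 2)" unfolding v_def using c_eq by simp
      have "cond ((real_of_int p + real_of_int q * sd) / 2) (- ((real_of_int p - real_of_int q * sd) / 2))"
        using cnd unfolding s_eq veq .
      hence "(p,q) \<in> T2" unfolding T2_def by simp
      thus ?thesis using s_eq unfolding g_def by force
    qed
  qed
  have T1b: "finite T1 \<and> real (card T1) \<le> (M+1) * (2 * M * (\<beta>1 - \<alpha>) + 1)"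
  proof (rule strip_count[where L = "\<lambda>p. real_of_int p * A1 / sd"])
    fix p q assume "(p,q) \<in> T1"
    hence cnd: "cond ((real_of_int p + real_of_int q * sd) / 2) ((real_of_int p - real_of_int q * sd) / 2)"
      unfolding T1_def by simp
    define u where "u = (real_of_int p + real_of_int q * sd) / 2"
    define v where "v = (real_of_int p - real_of_int q * sd) / 2"
    have uv: "u + v = p" "u - v = q * sd" unfolding u_def v_def by (simp_all add: field_simps)
    have v0: "0 < v" and c1: "\<alpha> * v \<le> u" and c2: "u \<le> \<beta>1 * v" and c3: "u + v \<le> M"
      using cnd unfolding cond_def u_def v_def by auto
    have w: "(u+v)*A1 \<le> u - v \<and> u - v \<le> (u+v)*A1 + 2*M*(\<beta>1-\<alpha>)"
      unfolding A1_def by (rule wedge[OF v0 a c1 c2 c3])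
    have "0 < \<alpha> * v" using a v0 by simp
    hence p0: "0 \<le> p" using uv c1 v0 by linarith
    have pM: "real_of_int p \<le> M" using uv c3 by simp
    have lo: "real_of_int p * A1 / sd \<le> q" using w uv sd1 by (simp add: divide_le_eq)
    have "real_of_int q \<le> (real_of_int p * A1 + 2*M*(\<beta>1-\<alpha>)) / sd" using w uv sd1 by (simp add: le_divide_eq)
    also have "\<dots> = real_of_int p * A1 / sd + 2*M*(\<beta>1-\<alpha>) / sd" by (simp add: add_divide_distrib)
    also have "2*M*(\<beta>1-\<alpha>) / sd \<le> 2*M*(\<beta>1-\<alpha>)" using l0 sd1 by (simp add: divide_le_eq mult_le_cancel_left1 mult_left_mono)
    finally have hi: "real_of_int q \<le> real_of_int p * A1 / sd + 2*M*(\<beta>1-\<alpha>)" by simp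
    show "0 \<le> p \<and> real_of_int p \<le> M \<and> real_of_int p * A1 / sd \<le> real_of_int q \<and> real_of_int q \<le> real_of_int p * A1 / sd + 2*M*(\<beta>1-\<alpha>)"
      using p0 pM lo hi by simp
  qed (use l0 M0 in auto)
  define sw where "sw = (\<lambda>(p::int,q::int). (q,p))"
  have injsw: "inj_on sw T2" unfolding sw_def inj_on_def by auto
  have T2b: "finite (sw ` T2) \<and> real (card (sw ` T2)) \<le> (M+1) * (2 * M * (\<beta>1 - \<alpha>) + 1)"
  proof (rule strip_count[where L = "\<lambda>q. real_of_int q * sd * A1"])
    fix q p assume "(q,p) \<in> sw ` T2"
    hence "(p,q) \<in> T2" unfolding sw_def by auto
    hence cnd: "cond ((real_of_int p + real_of_int q * sd) / 2) (- ((real_of_int p - real_of_int q * sd) / 2))"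
      unfolding T2_def by simp
    define u where "u = (real_of_int p + real_of_int q * sd) / 2"
    define v where "v = - ((real_of_int p - real_of_int q * sd) / 2)"
    have uv: "u + v = q * sd" "u - v = p" unfolding u_def v_def by (simp_all add: field_simps)
    have v0: "0 < v" and c1: "\<alpha> * v \<le> u" and c2: "u \<le> \<beta>1 * v" and c3: "u + v \<le> M"
      using cnd unfolding cond_def u_def v_def by auto
    have w: "(u+v)*A1 \<le> u - v \<and> u - v \<le> (u+v)*A1 + 2*M*(\<beta>1-\<alpha>)"
      unfolding A1_def by (rule wedge[OF v0 a c1 c2 c3])
    have "0 < \<alpha> * v" using a v0 by simp
    hence "0 < q * sd" using uv c1 v0 by linarith
    hence q0: "0 < q" using sd1 by (simp add: zero_less_mult_iff)
    have "real_of_int q \<le> q * sd" using q0 sd1 by simp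
    hence qM: "real_of_int q \<le> M" using uv c3 by simp
    show "0 \<le> q \<and> real_of_int q \<le> M \<and> real_of_int q * sd * A1 \<le> real_of_int p \<and> real_of_int p \<le> real_of_int q * sd * A1 + 2*M*(\<beta>1-\<alpha>)"
      using q0 qM w uv by simp
  qed (use l0 M0 in auto)
  have cT2: "card (sw ` T2) = card T2" by (rule card_image[OF injsw])
  have fT2: "finite T2" using T2b injsw finite_imageD by blast
  have fin: "finite (g ` (T1 \<union> T2))" using T1b fT2 by simp
  have "card A \<le> card (g ` (T1 \<union> T2))" by (rule card_mono[OF fin sub])
  also have "\<dots> \<le> card (T1 \<union> T2)" by (rule card_image_le) (use T1b fT2 in simp)
  also have "\<dots> \<le> card T1 + card T2" by (rule card_Un_le)
  finally have "real (card A) \<le> real (card T1) + real (card (sw ` T2))" using cT2 by simp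
  also have "\<dots> \<le> 2 * (M+1) * (2 * M * (\<beta>1 - \<alpha>) + 1)"
  proof -
    have "2 * (M+1) * (2 * M * (\<beta>1 - \<alpha>) + 1) = (M+1) * (2 * M * (\<beta>1 - \<alpha>) + 1) + (M+1) * (2 * M * (\<beta>1 - \<alpha>) + 1)"
      by (simp add: algebra_simps)
    thus ?thesis using T1b[THEN conjunct2] T2b[THEN conjunct2] by linarith
  qed
  finally show ?thesis using finite_subset[OF sub fin] unfolding A_def M_def \<beta>1_def by simp
qed

lemma S_props:
  assumes "s \<in> S_set d \<epsilon> x" and "\<epsilon> > 1"
  shows "s > 0 \<and> \<bar>qconj d s\<bar> > 0 \<and> 1/\<epsilon> < s / \<bar>qconj d s\<bar> \<and> s / \<bar>qconj d s\<bar> \<le> \<epsilon>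
     \<and> W d \<epsilon> s = ln (s / \<bar>qconj d s\<bar>) / (2 * ln \<epsilon>)"
proof -
  have b1: "\<bar>qconj d s\<bar> / \<epsilon> < \<bar>s\<bar>" and b2: "\<bar>s\<bar> \<le> \<epsilon> * \<bar>qconj d s\<bar>" and sp: "s > 0"
    using assms unfolding S_set_def by auto
  have "\<bar>qconj d s\<bar> \<noteq> 0" using b2 sp by auto
  hence vp: "\<bar>qconj d s\<bar> > 0" by simp
  have "1/\<epsilon> < s / \<bar>qconj d s\<bar>" using b1 vp sp assms(2) by (simp add: field_simps)
  moreover have "s / \<bar>qconj d s\<bar> \<le> \<epsilon>" using b2 vp sp by (simp add: divide_le_eq)
  moreover have "W d \<epsilon> s = ln (s / \<bar>qconj d s\<bar>) / (2 * ln \<epsilon>)" unfolding W_def using sp by (simp add: abs_divide)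
  ultimately show ?thesis using sp vp by simp
qed

lemma fin_S:
  assumes rq: "real_quadratic_field d" and e: "\<epsilon> > 1" and x: "x \<ge> 1"
  shows "finite (S_set d \<epsilon> x)"
proof -
  have "S_set d \<epsilon> x = {s \<in> S_set d \<epsilon> x. 1/\<epsilon> \<le> s / \<bar>qconj d s\<bar> \<and> s / \<bar>qconj d s\<bar> \<le> \<epsilon>}"
    using S_props[OF _ e] by (auto simp: less_imp_le)
  moreover have "1/\<epsilon> \<le> min \<epsilon> \<epsilon>" using e mult_mono[of 1 \<epsilon> 1 \<epsilon>] by (simp add: divide_le_eq)
  ultimately show ?thesis using count_rho[OF rq e x, of "1/\<epsilon>" \<epsilon>] e by simp
qed

definition cW :: "real \<Rightarrow> real" where "cW \<epsilon> = 48 * \<epsilon>^2 * ln \<epsilon> + 6 * sqrt \<epsilon>"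

lemma count_W:
  fixes a b :: real
  assumes rq: "real_quadratic_field d" and e: "\<epsilon> > 1" and x: "x \<ge> 1" and ab: "a \<le> b"
  shows "real (card {s \<in> S_set d \<epsilon> x. a \<le> W d \<epsilon> s \<and> W d \<epsilon> s \<le> b}) \<le> cW \<epsilon> * (x * (b - a) + sqrt x)"
proof -
  define B where "B = {s \<in> S_set d \<epsilon> x. a \<le> W d \<epsilon> s \<and> W d \<epsilon> s \<le> b}"
  define \<alpha> where "\<alpha> = exp (2 * a * ln \<epsilon>)"
  define \<beta> where "\<beta> = exp (2 * b * ln \<epsilon>)"
  define A where "A = {s \<in> S_set d \<epsilon> x. \<alpha> \<le> s / \<bar>qconj d s\<bar> \<and> s / \<bar>qconj d s\<bar> \<le> \<beta>}"
  have le: "ln \<epsilon> > 0" using e by simp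
  have sub: "B \<subseteq> A"
  proof
    fix s assume "s \<in> B"
    hence sS: "s \<in> S_set d \<epsilon> x" and w1: "a \<le> W d \<epsilon> s" and w2: "W d \<epsilon> s \<le> b" unfolding B_def by auto
    note P = S_props[OF sS e]
    define r where "r = s / \<bar>qconj d s\<bar>"
    have rp: "r > 0" using P unfolding r_def by simp
    have W: "W d \<epsilon> s = ln r / (2 * ln \<epsilon>)" using P unfolding r_def by simp
    have "2 * a * ln \<epsilon> \<le> ln r" using w1 le unfolding W by (simp add: le_divide_eq algebra_simps)
    hence "\<alpha> \<le> r" unfolding \<alpha>_def using rp by (metis exp_le_cancel_iff exp_ln)
    moreover have "ln r \<le> 2 * b * ln \<epsilon>" using w2 le unfolding W by (simp add: divide_le_eq algebra_simps)
    hence "r \<le> \<beta>" unfolding \<beta>_def using rp by (metis exp_le_cancel_iff exp_ln)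
    ultimately show "s \<in> A" using sS unfolding A_def r_def by simp
  qed
  have c0: "cW \<epsilon> \<ge> 0" unfolding cW_def using e le by simp
  have rhs0: "cW \<epsilon> * (x * (b - a) + sqrt x) \<ge> 0" using c0 ab x by simp
  show ?thesis
  proof (cases "\<alpha> \<le> min \<beta> \<epsilon>")
    case False
    have "A = {}"
    proof (rule ccontr)
      assume "A \<noteq> {}"
      then obtain s where sA: "s \<in> A" by blast
      hence sS: "s \<in> S_set d \<epsilon> x" unfolding A_def by simp
      note P = S_props[OF sS e]
      show False using sA P False unfolding A_def by auto
    qed
    hence "B = {}" using sub by blast
    hence "real (card B) \<le> cW \<epsilon> * (x * (b - a) + sqrt x)" using rhs0 by simp
    thus ?thesis unfolding B_def .
  next
    case True
    define \<beta>1 where "\<beta>1 = min \<beta> \<epsilon>"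
    define y where "y = sqrt (\<epsilon> * x)"
    have a0: "\<alpha> > 0" unfolding \<alpha>_def by simp
    have CR: "finite A \<and> real (card A) \<le> 2 * (2 * y + 1) * (2 * (2 * y) * (\<beta>1 - \<alpha>) + 1)"
      using count_rho[OF rq e x a0 True] unfolding A_def y_def \<beta>1_def by simp
    have b1p: "\<beta>1 > 0" "\<alpha> \<le> \<beta>1" using a0 True unfolding \<beta>1_def by auto
    have "ln (\<alpha> / \<beta>1) \<le> \<alpha> / \<beta>1 - 1" by (rule ln_le_minus_one) (use a0 b1p in simp)
    hence "\<beta>1 * (ln \<alpha> - ln \<beta>1) \<le> \<beta>1 * (\<alpha> / \<beta>1 - 1)" using a0 b1p by (simp add: ln_div)
    hence k1: "\<beta>1 - \<alpha> \<le> \<beta>1 * (ln \<beta>1 - ln \<alpha>)" using b1p by (simp add: algebra_simps)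
    have lnn: "ln \<beta>1 - ln \<alpha> \<ge> 0" using b1p a0 by simp
    have "\<beta>1 * (ln \<beta>1 - ln \<alpha>) \<le> \<epsilon> * (ln \<beta>1 - ln \<alpha>)"
      using lnn unfolding \<beta>1_def by (intro mult_right_mono) auto
    also have "\<dots> \<le> \<epsilon> * (ln \<beta> - ln \<alpha>)"
      using e b1p unfolding \<beta>1_def by (intro mult_left_mono) (auto simp: min_def)
    also have "ln \<beta> - ln \<alpha> = 2 * (b - a) * ln \<epsilon>" unfolding \<alpha>_def \<beta>_def by (simp add: algebra_simps)
    finally have k2: "\<beta>1 - \<alpha> \<le> 2 * \<epsilon> * (b - a) * ln \<epsilon>" using k1 by (simp add: algebra_simps)
    have y1: "y \<ge> 1" unfolding y_def using e x mult_mono[of 1 \<epsilon> 1 x] by simp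
    have yy: "y * y = \<epsilon> * x" unfolding y_def using e x by simp
    have ysq: "y = sqrt \<epsilon> * sqrt x" unfolding y_def by (simp add: real_sqrt_mult)
    define K where "K = 2 * \<epsilon> * (b - a) * ln \<epsilon>"
    have K0: "K \<ge> 0" unfolding K_def using e ab le by simp
    have "real (card B) \<le> real (card A)" using card_mono[OF _ sub] CR by simp
    also have "\<dots> \<le> 2 * (2 * y + 1) * (2 * (2 * y) * (\<beta>1 - \<alpha>) + 1)" using CR by simp
    also have "\<dots> \<le> 2 * (2 * y + 1) * (4 * y * K + 1)"
      using k2 y1 unfolding K_def by (intro mult_left_mono) auto
    also have "\<dots> \<le> 2 * (3 * y) * (4 * y * K + 1)"
      using y1 K0 by (intro mult_right_mono mult_left_mono) auto
    also have "\<dots> = 24 * (y * y) * K + 6 * y" by (simp add: algebra_simps)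
    also have "\<dots> = 48 * \<epsilon>^2 * ln \<epsilon> * (x * (b - a)) + 6 * sqrt \<epsilon> * sqrt x"
    proof -
      have "24 * (y * y) * K = 48 * \<epsilon>^2 * ln \<epsilon> * (x * (b - a))" unfolding yy K_def by (simp add: algebra_simps power2_eq_square)
      moreover have "6 * y = 6 * sqrt \<epsilon> * sqrt x" unfolding ysq by simp
      ultimately show ?thesis by linarith
    qed
    also have "\<dots> \<le> cW \<epsilon> * (x * (b - a) + sqrt x)"
    proof -
      have "48 * \<epsilon>^2 * ln \<epsilon> * (x * (b - a)) \<le> cW \<epsilon> * (x * (b - a))"
        unfolding cW_def using e ab x by (intro mult_right_mono) auto
      moreover have "6 * sqrt \<epsilon> * sqrt x \<le> cW \<epsilon> * sqrt x"
        unfolding cW_def using e le x by (intro mult_right_mono) auto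
      ultimately show ?thesis by (simp add: distrib_left)
    qed
    finally show ?thesis unfolding B_def .
  qed
qed

lemma W_bound:
  assumes "s \<in> S_set d \<epsilon> x" and e: "\<epsilon> > 1"
  shows "\<bar>W d \<epsilon> s\<bar> \<le> 1/2"
proof -
  note P = S_props[OF assms]
  define r where "r = s / \<bar>qconj d s\<bar>"
  have rp: "r > 0" and r1: "1/\<epsilon> < r" and r2: "r \<le> \<epsilon>" using P e unfolding r_def by auto
  have le: "ln \<epsilon> > 0" using e by simp
  have "ln r \<le> ln \<epsilon>" using r2 rp by simp
  moreover have "ln (1/\<epsilon>) \<le> ln r" using r1 rp e by (subst ln_le_cancel_iff) auto
  hence "- ln \<epsilon> \<le> ln r" using e by (simp add: ln_div)
  ultimately have "\<bar>ln r\<bar> \<le> ln \<epsilon>" by simp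
  hence "\<bar>ln r\<bar> / (2 * ln \<epsilon>) \<le> 1/2" using le by (simp add: divide_le_eq)
  moreover have "\<bar>W d \<epsilon> s\<bar> = \<bar>ln r\<bar> / (2 * ln \<epsilon>)" using P le unfolding r_def by (simp add: abs_divide)
  ultimately show ?thesis by simp
qed

lemma count_dist:
  fixes a b \<theta> :: real
  assumes rq: "real_quadratic_field d" and e: "\<epsilon> > 1" and x: "x \<ge> 1" and th: "\<bar>\<theta>\<bar> \<le> 1/2"
    and a0: "0 \<le> a" and ab: "a \<le> b"
  shows "real (card {s \<in> S_set d \<epsilon> x. a \<le> dist_int (W d \<epsilon> s - \<theta>) \<and> dist_int (W d \<epsilon> s - \<theta>) \<le> b})
    \<le> 6 * cW \<epsilon> * (x * (b - a) + sqrt x)"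
proof -
  define D where "D = {s \<in> S_set d \<epsilon> x. a \<le> dist_int (W d \<epsilon> s - \<theta>) \<and> dist_int (W d \<epsilon> s - \<theta>) \<le> b}"
  define I where "I = ({-1, 0, 1::int} \<times> (UNIV :: bool set))"
  define lo where "lo = (\<lambda>(n::int, \<sigma>::bool). if \<sigma> then \<theta> + n + a else \<theta> + n - b)"
  define A where "A = (\<lambda>i. {s \<in> S_set d \<epsilon> x. lo i \<le> W d \<epsilon> s \<and> W d \<epsilon> s \<le> lo i + (b - a)})"
  have sub: "D \<subseteq> (\<Union>i\<in>I. A i)"
  proof
    fix s assume "s \<in> D"
    hence sS: "s \<in> S_set d \<epsilon> x" and d1: "a \<le> dist_int (W d \<epsilon> s - \<theta>)" and d2: "dist_int (W d \<epsilon> s - \<theta>) \<le> b"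
      unfolding D_def by auto
    define y where "y = W d \<epsilon> s - \<theta>"
    define n where "n = round y"
    have "\<bar>y\<bar> \<le> 1" using W_bound[OF sS e] th unfolding y_def by linarith
    moreover have "\<bar>of_int n - y\<bar> \<le> 1/2" unfolding n_def by (rule of_int_round_abs_le)
    ultimately have "\<bar>real_of_int n\<bar> < 2" by linarith
    hence "\<bar>n\<bar> < 2" by linarith
    hence nI: "n \<in> {-1,0,1}" by auto
    have dd: "dist_int y = \<bar>y - of_int n\<bar>" unfolding dist_int_def n_def by simp
    show "s \<in> (\<Union>i\<in>I. A i)"
    proof (cases "y - of_int n \<ge> 0")
      case True
      hence "s \<in> A (n, True)" using sS d1 d2 dd unfolding A_def lo_def y_def by auto
      thus ?thesis using nI unfolding I_def by blast
    next
      case False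
      hence "s \<in> A (n, False)" using sS d1 d2 dd unfolding A_def lo_def y_def by auto
      thus ?thesis using nI unfolding I_def by blast
    qed
  qed
  have finI: "finite I" unfolding I_def by simp
  have cI: "card I = 6" unfolding I_def by (simp add: card_cartesian_product)
  have finU: "finite (\<Union>i\<in>I. A i)" using fin_S[OF rq e x] finI unfolding A_def by auto
  have "real (card D) \<le> real (card (\<Union>i\<in>I. A i))" using card_mono[OF finU sub] by simp
  also have "\<dots> \<le> real (\<Sum>i\<in>I. card (A i))" using card_UN_le[OF finI, of A] by linarith
  also have "\<dots> = (\<Sum>i\<in>I. real (card (A i)))" by simp
  also have "\<dots> \<le> (\<Sum>i\<in>I. cW \<epsilon> * (x * (b - a) + sqrt x))"
  proof (rule sum_mono)
    fix i assume "i \<in> I"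
    have "real (card (A i)) \<le> cW \<epsilon> * (x * (lo i + (b - a) - lo i) + sqrt x)"
      unfolding A_def by (rule count_W[OF rq e x]) (use ab in simp)
    thus "real (card (A i)) \<le> cW \<epsilon> * (x * (b - a) + sqrt x)" by simp
  qed
  also have "\<dots> = 6 * cW \<epsilon> * (x * (b - a) + sqrt x)" using cI by simp
  finally show ?thesis unfolding D_def .
qed

definition FF :: "real \<Rightarrow> real \<Rightarrow> real" where
  "FF Z \<tau> = (if \<tau> = 0 then ln Z else min (ln Z) (1 / (Z * \<tau>)))"

lemma dist_int_bounds: "0 \<le> dist_int y \<and> dist_int y \<le> 1/2"
  unfolding dist_int_def using of_int_round_abs_le[of y] by linarith

lemma FF_nonneg: "Z \<ge> 2 \<Longrightarrow> 0 \<le> \<tau> \<Longrightarrow> 0 \<le> FF Z \<tau>"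
  unfolding FF_def by auto

lemma min_add: "0 < (p::real) \<Longrightarrow> 0 < q \<Longrightarrow> 0 \<le> L \<Longrightarrow> min L (p+q) \<le> min L p + min L q"
  by (auto simp: min_def)

lemma T_le:
  assumes "Z \<ge> 2"
  shows "T_Z Z \<eta>1 \<eta>2 w \<le> FF Z (dist_int (w - \<eta>1/2)) + FF Z (dist_int (w - \<eta>2/2))"
proof -
  define t1 where "t1 = dist_int (w - \<eta>1/2)"
  define t2 where "t2 = dist_int (w - \<eta>2/2)"
  have t: "t1 \<ge> 0" "t2 \<ge> 0" unfolding t1_def t2_def using dist_int_bounds by auto
  have f: "FF Z t1 \<ge> 0" "FF Z t2 \<ge> 0" using FF_nonneg[OF assms] t by auto
  show ?thesis
  proof (cases "t1 = 0 \<or> t2 = 0")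
    case True
    hence "T_Z Z \<eta>1 \<eta>2 w = ln Z" unfolding T_Z_def t1_def t2_def by auto
    moreover have "FF Z t1 + FF Z t2 \<ge> ln Z" using True f unfolding FF_def by auto
    ultimately show ?thesis unfolding t1_def t2_def by simp
  next
    case False
    hence "T_Z Z \<eta>1 \<eta>2 w = min (ln Z) (1 / (Z * t1) + 1 / (Z * t2))" unfolding T_Z_def t1_def t2_def by auto
    moreover have "FF Z t1 + FF Z t2 = min (ln Z) (1 / (Z * t1)) + min (ln Z) (1 / (Z * t2))"
      using False unfolding FF_def by auto
    moreover have "1 / (Z * t1) > 0" "1 / (Z * t2) > 0" using False t assms by auto
    moreover have "ln Z \<ge> 0" using assms by simp
    ultimately show ?thesis unfolding t1_def t2_def using min_add by metis
  qed
qed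

lemma harm_bound: "n \<ge> 1 \<Longrightarrow> (\<Sum>k=1..n. 1 / real k) \<le> 1 + ln (real n)"
proof (induction n rule: dec_induct)
  case base
  then show ?case by simp
next
  case (step n)
  have n1: "real n \<ge> 1" using step by simp
  have "ln (real n / (real n + 1)) \<le> real n / (real n + 1) - 1"
    by (rule ln_le_minus_one) (use n1 in simp)
  also have "\<dots> = - 1 / (real n + 1)" using n1 by (simp add: field_simps)
  finally have h: "1 / (real n + 1) \<le> ln (real n + 1) - ln (real n)" using n1 by (simp add: ln_div)
  have "(\<Sum>k=1..Suc n. 1 / real k) = (\<Sum>k=1..n. 1 / real k) + 1 / (real n + 1)" by (simp add: add.commute)
  moreover have "ln (real (Suc n)) = ln (real n + 1)" by (simp add: add.commute)
  ultimately show ?case using step.IH h by linarith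
qed

lemma ln2_half: "ln (2::real) \<ge> 1/2"
proof -
  have "ln (1/2::real) \<le> 1/2 - 1" by (rule ln_le_minus_one) simp
  thus ?thesis by (simp add: ln_div)
qed

lemma FF_le:
  assumes Z: "Z \<ge> 2" and t0: "0 \<le> \<tau>" and t1: "\<tau> \<le> 1/2"
  shows "FF Z \<tau> \<le> (if \<tau> \<le> 1/Z then ln Z else 0)
     + (\<Sum>k\<in>{1..nat \<lceil>Z\<rceil>}. if real k / Z \<le> \<tau> \<and> \<tau> \<le> (real k + 1) / Z then 1 / real k else 0)"
proof -
  have s0: "0 \<le> (\<Sum>k\<in>{1..nat \<lceil>Z\<rceil>}. if real k / Z \<le> \<tau> \<and> \<tau> \<le> (real k + 1) / Z then 1 / real k else 0)"
    by (intro sum_nonneg) auto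
  show ?thesis
  proof (cases "\<tau> \<le> 1/Z")
    case True
    have "FF Z \<tau> \<le> ln Z" unfolding FF_def by auto
    thus ?thesis using True s0 by simp
  next
    case False
    have Zp: "Z > 0" using Z by simp
    have "1 / Z < \<tau>" using False by simp
    hence zt: "Z * \<tau> > 1" using Zp by (simp add: field_simps)
    define k where "k = nat \<lfloor>Z * \<tau>\<rfloor>"
    have k1: "real k \<le> Z * \<tau>" "Z * \<tau> < real k + 1" unfolding k_def using zt by linarith+
    have kge: "k \<ge> 1" unfolding k_def using zt by linarith
    have "Z * \<tau> \<le> Z * (1/2)" using t1 Zp by (intro mult_left_mono) auto
    hence "Z * \<tau> \<le> Z" using Zp by linarith
    hence kle: "k \<le> nat \<lceil>Z\<rceil>" using k1 by linarith
    have c1: "real k / Z \<le> \<tau>" using k1 Zp by (simp add: divide_le_eq mult.commute)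
    have c2: "\<tau> \<le> (real k + 1) / Z" using k1 Zp by (simp add: le_divide_eq mult.commute)
    have "FF Z \<tau> \<le> 1 / (Z * \<tau>)" unfolding FF_def using zt by auto
    also have "\<dots> \<le> 1 / real k" using k1 kge by (intro divide_left_mono) auto
    also have "\<dots> = (if real k / Z \<le> \<tau> \<and> \<tau> \<le> (real k + 1) / Z then 1 / real k else 0)" using c1 c2 by simp
    also have "\<dots> \<le> (\<Sum>k\<in>{1..nat \<lceil>Z\<rceil>}. if real k / Z \<le> \<tau> \<and> \<tau> \<le> (real k + 1) / Z then 1 / real k else 0)"
      by (rule member_le_sum[where f = "\<lambda>k. if real k / Z \<le> \<tau> \<and> \<tau> \<le> (real k + 1) / Z then 1 / real k else 0"])
         (use kge kle in auto)
    finally show ?thesis using False by simp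
  qed
qed

lemma sum_if_le:
  assumes "finite A" "c \<ge> 0" "real (card {s \<in> A. P s}) \<le> N"
  shows "(\<Sum>s\<in>A. if P s then c else 0) \<le> c * N"
proof -
  have "(\<Sum>s\<in>A. if P s then c else 0) = (\<Sum>s\<in>{s \<in> A. P s}. c)" using assms(1) by (rule sum.inter_filter[symmetric])
  also have "\<dots> = c * real (card {s \<in> A. P s})" by simp
  also have "\<dots> \<le> c * N" using assms by (intro mult_left_mono) auto
  finally show ?thesis .
qed

lemma sum_FF:
  assumes rq: "real_quadratic_field d" and e: "\<epsilon> > 1" and x: "x \<ge> 1" and Z: "Z \<ge> 2" and th: "\<bar>\<theta>\<bar> \<le> 1/2"
  shows "(\<Sum>s\<in>S_set d \<epsilon> x. FF Z (dist_int (W d \<epsilon> s - \<theta>))) \<le> 30 * cW \<epsilon> * (x / Z + sqrt x) * ln Z"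
proof -
  define S where "S = S_set d \<epsilon> x"
  define \<tau> where "\<tau> = (\<lambda>s. dist_int (W d \<epsilon> s - \<theta>))"
  define K where "K = nat \<lceil>Z\<rceil>"
  define Bc where "Bc = 6 * cW \<epsilon> * (x / Z + sqrt x)"
  have finS: "finite S" unfolding S_def by (rule fin_S[OF rq e x])
  have Zp: "Z > 0" using Z by simp
  have lnZ: "ln Z > 0" using Z by simp
  have cnt: "real (card {s \<in> S. a \<le> \<tau> s \<and> \<tau> s \<le> a + 1/Z}) \<le> Bc" if "a \<ge> 0" for a
  proof -
    have "real (card {s \<in> S. a \<le> \<tau> s \<and> \<tau> s \<le> a + 1/Z}) \<le> 6 * cW \<epsilon> * (x * (a + 1/Z - a) + sqrt x)"
      unfolding S_def \<tau>_def by (rule count_dist[OF rq e x th that]) (use Zp in simp)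
    thus ?thesis unfolding Bc_def by simp
  qed
  have "(\<Sum>s\<in>S. FF Z (\<tau> s)) \<le> (\<Sum>s\<in>S. (if \<tau> s \<le> 1/Z then ln Z else 0)
     + (\<Sum>k\<in>{1..K}. if real k / Z \<le> \<tau> s \<and> \<tau> s \<le> (real k + 1) / Z then 1 / real k else 0))"
    unfolding K_def by (rule sum_mono, rule FF_le[OF Z]) (use dist_int_bounds in \<open>auto simp: \<tau>_def\<close>)
  also have "\<dots> = (\<Sum>s\<in>S. if \<tau> s \<le> 1/Z then ln Z else 0)
     + (\<Sum>k\<in>{1..K}. \<Sum>s\<in>S. if real k / Z \<le> \<tau> s \<and> \<tau> s \<le> (real k + 1) / Z then 1 / real k else 0)"
    by (simp add: sum.distrib sum.swap[of _ S])
  also have "\<dots> \<le> ln Z * Bc + (\<Sum>k\<in>{1..K}. 1 / real k * Bc)"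
  proof (rule add_mono)
    have e1: "{s \<in> S. \<tau> s \<le> 1/Z} = {s \<in> S. 0 \<le> \<tau> s \<and> \<tau> s \<le> 0 + 1/Z}"
      using dist_int_bounds unfolding \<tau>_def by auto
    show "(\<Sum>s\<in>S. if \<tau> s \<le> 1/Z then ln Z else 0) \<le> ln Z * Bc"
      by (rule sum_if_le[OF finS]) (use lnZ cnt[of 0] e1 in auto)
    show "(\<Sum>k\<in>{1..K}. \<Sum>s\<in>S. if real k / Z \<le> \<tau> s \<and> \<tau> s \<le> (real k + 1) / Z then 1 / real k else 0)
        \<le> (\<Sum>k\<in>{1..K}. 1 / real k * Bc)"
    proof (rule sum_mono)
      fix k assume "k \<in> {1..K}"
      have e2: "(real k + 1) / Z = real k / Z + 1 / Z" by (simp add: add_divide_distrib)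
      show "(\<Sum>s\<in>S. if real k / Z \<le> \<tau> s \<and> \<tau> s \<le> (real k + 1) / Z then 1 / real k else 0) \<le> 1 / real k * Bc"
        by (rule sum_if_le[OF finS]) (use cnt[of "real k / Z"] Zp e2 in auto)
    qed
  qed
  also have "\<dots> = Bc * (ln Z + (\<Sum>k=1..K. 1 / real k))"
  proof -
    have "(\<Sum>k\<in>{1..K}. 1 / real k * Bc) = Bc * (\<Sum>k=1..K. 1 / real k)"
      by (simp add: sum_distrib_left mult.commute)
    thus ?thesis by (simp add: algebra_simps)
  qed
  also have "\<dots> \<le> Bc * (5 * ln Z)"
  proof (rule mult_left_mono)
    have K1: "K \<ge> 1" unfolding K_def using Z by linarith
    have "real K \<le> 2 * Z" unfolding K_def using Z by linarith
    hence "ln (real K) \<le> ln (2 * Z)" using K1 by simp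
    also have "\<dots> = ln 2 + ln Z" using Zp by (simp add: ln_mult)
    also have "\<dots> \<le> 2 * ln Z" using Z by simp
    finally have "ln (real K) \<le> 2 * ln Z" .
    moreover have "ln 2 \<le> ln Z" using Z by simp
    ultimately show "ln Z + (\<Sum>k=1..K. 1 / real k) \<le> 5 * ln Z"
      using harm_bound[OF K1] ln2_half by linarith
    show "0 \<le> Bc" unfolding Bc_def cW_def using e x Zp by simp
  qed
  also have "\<dots> = 30 * cW \<epsilon> * (x / Z + sqrt x) * ln Z" unfolding Bc_def by simp
  finally show ?thesis unfolding S_def \<tau>_def .
qed

lemma final_ineq:
  fixes x Z \<delta> :: real
  assumes x: "x \<ge> 2" and Z: "Z \<ge> 2" and dl: "\<delta> > 0"
  shows "(x / Z + sqrt x) * ln Z \<le> 2 * (x powr (1/2 + \<delta>) * (ln Z + x * ln x / Z))"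
proof -
  define P where "P = x powr (1/2 + \<delta>)"
  have "sqrt x = x powr (1/2)" using x by (simp add: powr_half_sqrt)
  also have "\<dots> \<le> P" unfolding P_def using x dl by (intro powr_mono) auto
  finally have sP: "sqrt x \<le> P" .
  have s1: "sqrt x \<ge> 1" using x by simp
  have P1: "P \<ge> 1" using sP s1 by linarith
  have lnZ: "ln Z > 0" and lnx: "ln x > 0" using x Z by auto
  have Zp: "Z > 0" using Z by simp
  have A: "sqrt x * ln Z \<le> P * ln Z" using sP lnZ by (simp add: mult_right_mono)
  have B: "x * ln Z / Z \<le> P * ln Z + 2 * (P * (x * ln x / Z))"
  proof (cases "Z \<le> x^2")
    case True
    have "ln Z \<le> ln (x^2)" using True Zp x by simp
    also have "\<dots> = 2 * ln x" using x by (simp add: ln_realpow)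
    finally have "x * ln Z / Z \<le> x * (2 * ln x) / Z" using x Zp by (simp add: divide_right_mono)
    also have "\<dots> = 2 * (1 * (x * ln x / Z))" by simp
    also have "\<dots> \<le> 2 * (P * (x * ln x / Z))"
      using P1 x lnx Zp by (intro mult_left_mono mult_right_mono) auto
    finally have "x * ln Z / Z \<le> 2 * (P * (x * ln x / Z))" .
    moreover have "P * ln Z \<ge> 0" using P1 lnZ by simp
    ultimately show ?thesis by linarith
  next
    case False
    have "x \<le> x^2" using x by (simp add: power2_eq_square)
    hence "x / Z \<le> 1" using False Zp by simp
    hence "x * ln Z / Z \<le> 1 * ln Z" using lnZ by (metis mult.commute mult_right_mono less_imp_le times_divide_eq_right)
    also have "\<dots> \<le> P * ln Z" using P1 lnZ by (intro mult_right_mono) auto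
    finally have "x * ln Z / Z \<le> P * ln Z" .
    moreover have "P * (x * ln x / Z) \<ge> 0" using P1 x lnx Zp by simp
    ultimately show ?thesis by linarith
  qed
  have "(x / Z + sqrt x) * ln Z = x * ln Z / Z + sqrt x * ln Z" by (simp add: algebra_simps)
  also have "\<dots> \<le> 2 * (P * (ln Z + x * ln x / Z))"
  proof -
    have "2 * (P * (ln Z + x * ln x / Z)) = P * ln Z + P * ln Z + 2 * (P * (x * ln x / Z))"
      by (simp add: algebra_simps)
    thus ?thesis using A B by linarith
  qed
  finally show ?thesis unfolding P_def .
qed

theorem mainTheorem5:
  fixes d :: int and \<epsilon> \<delta> :: real
  assumes "real_quadratic_field d" and "class_number_one d"
    and "is_fundamental_unit d \<epsilon>" and "\<delta> > 0"
  shows "(\<exists>C. \<forall>\<eta>1 \<eta>2 x Z. -1 \<le> \<eta>1 \<longrightarrow> \<eta>1 < \<eta>2 \<longrightarrow> \<eta>2 \<le> 1 \<longrightarrow> x \<ge> 2 \<longrightarrow> Z \<ge> 2 \<longrightarrow>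
            (\<Sum>s\<in>S_set d \<epsilon> x. T_Z Z \<eta>1 \<eta>2 (W d \<epsilon> s))
              \<le> C * x powr (1/2 + \<delta>) * (ln Z + x * ln x / Z))
       \<and> (\<exists>C. \<forall>\<eta>1 \<eta>2 x. -1 \<le> \<eta>1 \<longrightarrow> \<eta>1 < \<eta>2 \<longrightarrow> \<eta>2 \<le> 1 \<longrightarrow> x \<ge> 2 \<longrightarrow>
            (\<Sum>s\<in>S_set d \<epsilon> x. T_Z x \<eta>1 \<eta>2 (W d \<epsilon> s)) \<le> C * x powr (1/2 + 2 * \<delta>))"
proof -
  note rq = assms(1)
  have e: "\<epsilon> > 1" using assms(3) unfolding is_fundamental_unit_def by simp
  define C1 where "C1 = 120 * cW \<epsilon>"
  have C1: "C1 \<ge> 0" unfolding C1_def cW_def using e by simp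
  have main: "(\<Sum>s\<in>S_set d \<epsilon> x. T_Z Z \<eta>1 \<eta>2 (W d \<epsilon> s)) \<le> C1 * x powr (1/2 + \<delta>) * (ln Z + x * ln x / Z)"
    if h: "-1 \<le> \<eta>1" "\<eta>1 < \<eta>2" "\<eta>2 \<le> 1" "x \<ge> 2" "Z \<ge> 2" for \<eta>1 \<eta>2 x Z
  proof -
    have x1: "x \<ge> 1" using h by simp
    have th1: "\<bar>\<eta>1/2\<bar> \<le> 1/2" and th2: "\<bar>\<eta>2/2\<bar> \<le> 1/2" using h by auto
    have "(\<Sum>s\<in>S_set d \<epsilon> x. T_Z Z \<eta>1 \<eta>2 (W d \<epsilon> s))
       \<le> (\<Sum>s\<in>S_set d \<epsilon> x. FF Z (dist_int (W d \<epsilon> s - \<eta>1/2)) + FF Z (dist_int (W d \<epsilon> s - \<eta>2/2)))"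
      by (rule sum_mono) (rule T_le[OF h(5)])
    also have "\<dots> = (\<Sum>s\<in>S_set d \<epsilon> x. FF Z (dist_int (W d \<epsilon> s - \<eta>1/2))) + (\<Sum>s\<in>S_set d \<epsilon> x. FF Z (dist_int (W d \<epsilon> s - \<eta>2/2)))"
      by (rule sum.distrib)
    also have "\<dots> \<le> 30 * cW \<epsilon> * (x / Z + sqrt x) * ln Z + 30 * cW \<epsilon> * (x / Z + sqrt x) * ln Z"
      by (intro add_mono sum_FF[OF rq e x1 h(5)] th1 th2)
    also have "\<dots> = 60 * cW \<epsilon> * ((x / Z + sqrt x) * ln Z)" by simp
    also have "\<dots> \<le> 60 * cW \<epsilon> * (2 * (x powr (1/2 + \<delta>) * (ln Z + x * ln x / Z)))"
      using final_ineq[OF h(4) h(5) assms(4)] C1 unfolding C1_def by (intro mult_left_mono) auto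
    also have "\<dots> = C1 * x powr (1/2 + \<delta>) * (ln Z + x * ln x / Z)" unfolding C1_def by simp
    finally show ?thesis .
  qed
  have part2: "(\<Sum>s\<in>S_set d \<epsilon> x. T_Z x \<eta>1 \<eta>2 (W d \<epsilon> s)) \<le> (2 * C1 / \<delta>) * x powr (1/2 + 2 * \<delta>)"
    if h: "-1 \<le> \<eta>1" "\<eta>1 < \<eta>2" "\<eta>2 \<le> 1" "x \<ge> 2" for \<eta>1 \<eta>2 x
  proof -
    have xp: "x > 0" using h by simp
    have "(\<Sum>s\<in>S_set d \<epsilon> x. T_Z x \<eta>1 \<eta>2 (W d \<epsilon> s)) \<le> C1 * x powr (1/2 + \<delta>) * (ln x + x * ln x / x)"
      using main[OF h h(4)] .
    also have "ln x + x * ln x / x = 2 * ln x" using xp by simp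
    also have "ln x \<le> x powr \<delta> / \<delta>"
    proof -
      have "ln (x powr \<delta>) \<le> x powr \<delta> - 1" by (rule ln_le_minus_one) (use xp in simp)
      hence "\<delta> * ln x \<le> x powr \<delta>" using xp by (simp add: ln_powr)
      thus ?thesis using assms(4) by (simp add: le_divide_eq mult.commute)
    qed
    hence "C1 * x powr (1/2 + \<delta>) * (2 * ln x) \<le> C1 * x powr (1/2 + \<delta>) * (2 * (x powr \<delta> / \<delta>))"
      using C1 by (intro mult_left_mono) auto
    also have "\<dots> = (2 * C1 / \<delta>) * (x powr (1/2 + \<delta>) * x powr \<delta>)" by simp
    also have "x powr (1/2 + \<delta>) * x powr \<delta> = x powr (1/2 + 2 * \<delta>)"
    proof -
      have "1/2 + \<delta> + \<delta> = 1/2 + 2 * \<delta>" by simp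
      thus ?thesis by (metis powr_add)
    qed
    finally show ?thesis by simp
  qed
  show ?thesis using main part2 by blast
qed

end
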